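(* For all $\epsilon>0$ and $k\in\mathbb{N}$, let $d=d(\epsilon)=1280\epsilon^{-2}$ and $N=N(\epsilon,k)=1800k\epsilon^{-4}$. Let $D$ be a properly totally coloured digraph on at least $N$ vertices with rainbow vertex set. Then there is a subset $A\subseteq V(D)$ which is $(k,d)$-connected in $D$ (in the coloured sense) and satisfies $|A|\geq\delta^+(D)-\epsilon|D|$.
   Context: Digraphs are finite, without loops and without multiple edges (an edge may appear in both directions). A path is a sequence of distinct vertices $x_1,\dots,x_t$ with each $x_ix_{i+1}$ a directed edge; its length is its number of edges. A total colouring assigns a colour to every vertex and edge; it is proper if outgoing edges at any vertex have distinct colours, ingoing edges at any vertex have distinct colours, adjacent vertices have distinct colours, and every edge has a colour different from both its endpoints. $D$ has rainbow vertex set if all vertices have distinct colours. A path is rainbow if all its vertices and edges have pairwise distinct colours. A set $A\subseteq V(D)$ is $(k,d)$-connected in the totally coloured digraph $D$ if for every set $S$ of at most $k-1$ colours and all $x,y\in A$ there is a rainbow path from $x$ to $y$ of length at most $d$ none of whose edges, and none of whose vertices other than $x,y$, has a colour in $S$. $\delta^+(D)$ is the minimum out-degree, $|D|$ the number of vertices. *)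

theory Defs
  imports Main Complex_Main
begin

text \<open>Since E is a set of ordered pairs there are no multiple edges,
  while both (x,y) and (y,x) may be present.\<close>

definition digraph :: "'a set \<Rightarrow> ('a \<times> 'a) set \<Rightarrow> bool" where
  "digraph V E \<longleftrightarrow> finite V \<and> E \<subseteq> V \<times> V \<and> (\<forall>x. (x, x) \<notin> E)"

definition proper_total_colouring ::
  "'a set \<Rightarrow> ('a \<times> 'a) set \<Rightarrow> ('a \<Rightarrow> 'c) \<Rightarrow> ('a \<times> 'a \<Rightarrow> 'c) \<Rightarrow> bool" where
  "proper_total_colouring V E cv ce \<longleftrightarrow>
     (\<forall>x y z. (x, y) \<in> E \<and> (x, z) \<in> E \<and> y \<noteq> z \<longrightarrow> ce (x, y) \<noteq> ce (x, z)) \<and>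
     (\<forall>x y z. (y, x) \<in> E \<and> (z, x) \<in> E \<and> y \<noteq> z \<longrightarrow> ce (y, x) \<noteq> ce (z, x)) \<and>
     (\<forall>x y. (x, y) \<in> E \<longrightarrow> cv x \<noteq> cv y) \<and>
     (\<forall>x y. (x, y) \<in> E \<longrightarrow> ce (x, y) \<noteq> cv x \<and> ce (x, y) \<noteq> cv y)"

definition rainbow_vertex_set :: "'a set \<Rightarrow> ('a \<Rightarrow> 'c) \<Rightarrow> bool" where
  "rainbow_vertex_set V cv \<longleftrightarrow> inj_on cv V"

definition path_edges :: "'a list \<Rightarrow> ('a \<times> 'a) list" where
  "path_edges xs = zip xs (tl xs)"

definition is_path :: "'a set \<Rightarrow> ('a \<times> 'a) set \<Rightarrow> 'a list \<Rightarrow> bool" where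
  "is_path V E xs \<longleftrightarrow> xs \<noteq> [] \<and> distinct xs \<and> set xs \<subseteq> V \<and> set (path_edges xs) \<subseteq> E"

definition path_length :: "'a list \<Rightarrow> nat" where
  "path_length xs = length xs - 1"

definition rainbow_path :: "('a \<Rightarrow> 'c) \<Rightarrow> ('a \<times> 'a \<Rightarrow> 'c) \<Rightarrow> 'a list \<Rightarrow> bool" where
  "rainbow_path cv ce xs \<longleftrightarrow> distinct (map cv xs @ map ce (path_edges xs))"

definition kd_connected ::
  "'a set \<Rightarrow> ('a \<times> 'a) set \<Rightarrow> ('a \<Rightarrow> 'c) \<Rightarrow> ('a \<times> 'a \<Rightarrow> 'c) \<Rightarrow> nat \<Rightarrow> real \<Rightarrow> 'a set \<Rightarrow> bool" where
  "kd_connected V E cv ce k d A \<longleftrightarrow>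
     (\<forall>S x y. finite S \<and> card S < k \<and> x \<in> A \<and> y \<in> A \<longrightarrow>
        (\<exists>xs. is_path V E xs \<and> hd xs = x \<and> last xs = y \<and> rainbow_path cv ce xs \<and>
              real (path_length xs) \<le> d \<and>
              (\<forall>e \<in> set (path_edges xs). ce e \<notin> S) \<and>
              (\<forall>v \<in> set xs. v \<noteq> x \<and> v \<noteq> y \<longrightarrow> cv v \<notin> S)))"

definition min_outdeg :: "'a set \<Rightarrow> ('a \<times> 'a) set \<Rightarrow> nat" where
  "min_outdeg V E = (if V = {} then 0 else Min ((\<lambda>x. card {y. (x, y) \<in> E}) ` V))"

end

theory Submission
  imports Defs
begin


lemma path_edges_Nil[simp]: "path_edges [] = []" by (simp add: path_edges_def)
lemma path_edges_single[simp]: "path_edges [x] = []" by (simp add: path_edges_def)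
lemma path_edges_Cons2[simp]: "path_edges (x # y # xs) = (x, y) # path_edges (y # xs)"
  by (simp add: path_edges_def)
lemma path_edges_Cons: "xs \<noteq> [] \<Longrightarrow> path_edges (x # xs) = (x, hd xs) # path_edges xs"
  by (cases xs) auto
lemma path_edges_snoc: "xs \<noteq> [] \<Longrightarrow> path_edges (xs @ [y]) = path_edges xs @ [(last xs, y)]"
proof (induction xs)
  case Nil then show ?case by simp
next
  case (Cons a xs)
  then show ?case by (cases xs) auto
qed
lemma length_path_edges[simp]: "length (path_edges xs) = length xs - 1"
  by (simp add: path_edges_def)
lemma path_edges_set: "(u,v) \<in> set (path_edges xs) \<Longrightarrow> u \<in> set xs \<and> v \<in> set xs"
  unfolding path_edges_def
  by (metis in_set_zipE list.sel(2) list.set_sel(2) tl_Nil)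

locale pdg =
  fixes V :: "'a set" and E :: "('a \<times> 'a) set" and cv :: "'a \<Rightarrow> 'c" and ce :: "'a \<times> 'a \<Rightarrow> 'c"
  assumes dig: "digraph V E" and prp: "proper_total_colouring V E cv ce"
    and rbw: "rainbow_vertex_set V cv"
begin

lemma finV: "finite V" using dig by (simp add: digraph_def)
lemma Esub: "E \<subseteq> V \<times> V" using dig by (simp add: digraph_def)
lemma noloop: "(x,x) \<notin> E" using dig by (simp add: digraph_def)
lemma cv_inj: "inj_on cv V" using rbw by (simp add: rainbow_vertex_set_def)
lemma out_inj: "(x,y) \<in> E \<Longrightarrow> (x,z) \<in> E \<Longrightarrow> ce (x,y) = ce (x,z) \<Longrightarrow> y = z"
  using prp unfolding proper_total_colouring_def by blast
lemma in_inj: "(y,x) \<in> E \<Longrightarrow> (z,x) \<in> E \<Longrightarrow> ce (y,x) = ce (z,x) \<Longrightarrow> y = z"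
  using prp unfolding proper_total_colouring_def by blast
lemma adj_cv: "(x,y) \<in> E \<Longrightarrow> cv x \<noteq> cv y"
  using prp unfolding proper_total_colouring_def by blast
lemma ce_cv1: "(x,y) \<in> E \<Longrightarrow> ce (x,y) \<noteq> cv x"
  using prp unfolding proper_total_colouring_def by blast
lemma ce_cv2: "(x,y) \<in> E \<Longrightarrow> ce (x,y) \<noteq> cv y"
  using prp unfolding proper_total_colouring_def by blast
lemma finE: "finite E" using Esub finV by (meson finite_SigmaI finite_subset)

definition outN where "outN u = {w. (u,w) \<in> E}"
definition inN where "inN b = {u. (u,b) \<in> E}"
lemma outN_sub: "outN u \<subseteq> V" using Esub by (auto simp: outN_def)
lemma inN_sub: "inN u \<subseteq> V" using Esub by (auto simp: inN_def)

definition cols :: "'a list \<Rightarrow> 'c set" where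
  "cols P = cv ` set P \<union> ce ` set (path_edges P)"

lemma card_cols: "card (cols P) \<le> 2 * length P - 1"
proof -
  have "card (cols P) \<le> card (cv ` set P) + card (ce ` set (path_edges P))"
    unfolding cols_def by (rule card_Un_le)
  also have "\<dots> \<le> card (set P) + card (set (path_edges P))"
    by (intro add_mono card_image_le) auto
  also have "\<dots> \<le> length P + length (path_edges P)"
    by (intro add_mono card_length)
  finally show ?thesis by simp
qed

lemma finite_cols: "finite (cols P)" by (simp add: cols_def)

lemma card_cv_pre: "finite C \<Longrightarrow> card {w\<in>V. cv w \<in> C} \<le> card C"
proof -
  assume "finite C"
  have "inj_on cv {w\<in>V. cv w \<in> C}" using cv_inj by (rule inj_on_subset) auto
  then have "card {w\<in>V. cv w \<in> C} = card (cv ` {w\<in>V. cv w \<in> C})" by (simp add: card_image)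
  also have "\<dots> \<le> card C" using \<open>finite C\<close> by (intro card_mono) auto
  finally show ?thesis .
qed

lemma card_out_pre: "finite C \<Longrightarrow> card {w\<in>outN u. ce (u,w) \<in> C} \<le> card C"
proof -
  assume "finite C"
  have "inj_on (\<lambda>w. ce (u,w)) {w\<in>outN u. ce (u,w) \<in> C}"
    by (rule inj_onI) (auto simp: outN_def intro: out_inj)
  then have "card {w\<in>outN u. ce (u,w) \<in> C} = card ((\<lambda>w. ce (u,w)) ` {w\<in>outN u. ce (u,w) \<in> C})" by (simp add: card_image)
  also have "\<dots> \<le> card C" using \<open>finite C\<close> by (intro card_mono) auto
  finally show ?thesis .
qed

lemma card_in_pre: "finite C \<Longrightarrow> card {w\<in>inN b. ce (w,b) \<in> C} \<le> card C"
proof -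
  assume "finite C"
  have "inj_on (\<lambda>w. ce (w,b)) {w\<in>inN b. ce (w,b) \<in> C}"
    by (rule inj_onI) (auto simp: inN_def intro: in_inj)
  then have "card {w\<in>inN b. ce (w,b) \<in> C} = card ((\<lambda>w. ce (w,b)) ` {w\<in>inN b. ce (w,b) \<in> C})" by (simp add: card_image)
  also have "\<dots> \<le> card C" using \<open>finite C\<close> by (intro card_mono) auto
  finally show ?thesis .
qed

end


context pdg begin

definition G where "G b v = (if (v,b) \<in> E then {ce (v,b)} else {})"

definition goodp where
  "goodp U F b w i P \<longleftrightarrow> P \<noteq> [] \<and> hd P = w \<and> distinct P \<and> set P \<subseteq> U \<and> set (path_edges P) \<subseteq> E
     \<and> length P \<le> Suc i \<and> rainbow_path cv ce P \<and> (\<forall>v\<in>set (tl P). cv v \<notin> F)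
     \<and> (\<forall>e\<in>set (path_edges P). ce e \<notin> F) \<and> G b (last P) \<inter> cols P = {}"

definition ball where "ball U F b w i = {v. \<exists>P. goodp U F b w i P \<and> last P = v}"

definition badset where "badset U b u = {w\<in>U. (u,w)\<in>E \<and> (w,b)\<in>E \<and> ce (u,w) = ce (w,b)}"

lemma ball_sub: "ball U F b w i \<subseteq> U"
  unfolding ball_def goodp_def by auto

lemma ball_mono: "i \<le> j \<Longrightarrow> ball U F b w i \<subseteq> ball U F b w j"
  unfolding ball_def goodp_def by fastforce

lemma ball0: "w \<in> U \<Longrightarrow> w \<in> ball U F b w 0"
  unfolding ball_def goodp_def
  apply (rule CollectI, rule exI[of _ "[w]"])
  by (auto simp: rainbow_path_def G_def cols_def dest: ce_cv1)

lemma cols_snoc: "P \<noteq> [] \<Longrightarrow> cols (P @ [w]) = cols P \<union> {cv w, ce (last P, w)}"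
  by (auto simp: cols_def path_edges_snoc)

lemma growth:
  assumes U: "U \<subseteq> V" and F: "finite F" and u: "u \<in> ball U F b w i"
  shows "card (outN u \<inter> U - ball U F b w (Suc i)) \<le> 2 * card F + 6 * i + 3 + card (badset U b u)"
proof -
  obtain P where gP: "goodp U F b w i P" and lP: "last P = u" using u unfolding ball_def by auto
  define C where "C = F \<union> cols P"
  have fC: "finite C" using F by (simp add: C_def finite_cols)
  have cP: "card (cols P) \<le> 2 * i + 1" using card_cols[of P] gP unfolding goodp_def by linarith
  have cC: "card C \<le> card F + 2 * i + 1" unfolding C_def using card_Un_le[of F "cols P"] cP by linarith
  have sub: "outN u \<inter> U - ball U F b w (Suc i) \<subseteq> {x\<in>V. cv x \<in> C} \<union> {x\<in>outN u. ce (u,x) \<in> C}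
      \<union> {x\<in>inN b. ce (x,b) \<in> cols P} \<union> badset U b u"
  proof
    fix x assume x: "x \<in> outN u \<inter> U - ball U F b w (Suc i)"
    show "x \<in> {x\<in>V. cv x \<in> C} \<union> {x\<in>outN u. ce (u,x) \<in> C} \<union> {x\<in>inN b. ce (x,b) \<in> cols P} \<union> badset U b u"
    proof (rule ccontr)
      assume nx: "\<not> ?thesis"
      have xV: "x \<in> V" using x U by auto
      have ux: "(u,x) \<in> E" using x by (simp add: outN_def)
      have c1: "cv x \<notin> C" using nx xV by auto
      have c2: "ce (u,x) \<notin> C" using nx x by auto
      have c3: "(x,b) \<in> E \<Longrightarrow> ce (x,b) \<notin> cols P" using nx by (auto simp: inN_def)
      have c4: "(x,b) \<in> E \<Longrightarrow> ce (u,x) \<noteq> ce (x,b)" using nx x ux by (auto simp: badset_def)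
      have Pne: "P \<noteq> []" using gP by (simp add: goodp_def)
      have xnP: "x \<notin> set P" using c1 by (auto simp: C_def cols_def)
      have pe: "path_edges (P @ [x]) = path_edges P @ [(u,x)]" using Pne lP by (simp add: path_edges_snoc)
      have rb: "distinct (map cv P @ map ce (path_edges P))" using gP by (simp add: goodp_def rainbow_path_def)
      have cvce: "cv x \<noteq> ce (u,x)" using ce_cv2[OF ux] by simp
      have "goodp U F b w (Suc i) (P @ [x])"
        unfolding goodp_def
      proof (intro conjI)
        show "rainbow_path cv ce (P @ [x])" unfolding rainbow_path_def pe
          using rb c1 c2 cvce by (auto simp: C_def cols_def)
        show "G b (last (P @ [x])) \<inter> cols (P @ [x]) = {}"
          using c3 c4 ce_cv1[of x b] Pne lP by (auto simp: G_def cols_snoc)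
        show "\<forall>v\<in>set (tl (P @ [x])). cv v \<notin> F" using gP Pne c1 by (auto simp: goodp_def C_def)
        show "\<forall>e\<in>set (path_edges (P @ [x])). ce e \<notin> F" using gP c2 pe by (auto simp: goodp_def C_def)
      qed (use gP Pne xnP x pe ux in \<open>auto simp: goodp_def\<close>)
      then have "x \<in> ball U F b w (Suc i)" unfolding ball_def by force
      then show False using x by simp
    qed
  qed
  have "card (outN u \<inter> U - ball U F b w (Suc i)) \<le> card ({x\<in>V. cv x \<in> C} \<union> {x\<in>outN u. ce (u,x) \<in> C}
      \<union> {x\<in>inN b. ce (x,b) \<in> cols P} \<union> badset U b u)"
    by (rule card_mono[OF _ sub]) (use finV outN_sub[of u] inN_sub[of b] U in \<open>auto simp: badset_def intro: finite_subset\<close>)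
  also have "\<dots> \<le> card {x\<in>V. cv x \<in> C} + card {x\<in>outN u. ce (u,x) \<in> C}
      + card {x\<in>inN b. ce (x,b) \<in> cols P} + card (badset U b u)"
    by (meson add_mono card_Un_le le_refl order_trans)
  also have "\<dots> \<le> card C + card C + card (cols P) + card (badset U b u)"
    using card_cv_pre[OF fC] card_out_pre[OF fC] card_in_pre[OF finite_cols] by (intro add_mono) auto
  finally show ?thesis using cC cP by linarith
qed

end


context pdg begin

lemma ball_card_step: "card (ball U F b w (Suc r)) = card (ball U F b w r) + card (ball U F b w (Suc r) - ball U F b w r)"
  if "U \<subseteq> V" for U F b w r
proof -
  have f: "finite (ball U F b w (Suc r))" using ball_sub[of U F b w "Suc r"] that finV by (meson finite_subset)
  have "ball U F b w r \<subseteq> ball U F b w (Suc r)" by (rule ball_mono) simp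
  then show ?thesis using f by (metis card_Diff_subset finite_subset card_mono le_add_diff_inverse)
qed

lemma stop_exists:
  assumes U: "U \<subseteq> V" and w: "w \<in> U" and eta: "\<eta> > 0"
  shows "\<exists>r. real r \<le> 1 / \<eta> \<and> real (card (ball U F b w (Suc r) - ball U F b w r)) < \<eta> * real (card V)"
proof (rule ccontr)
  assume H: "\<not> ?thesis"
  define R where "R = nat \<lfloor>1 / \<eta>\<rfloor>"
  have Rle: "r \<le> R \<Longrightarrow> real r \<le> 1 / \<eta>" for r
    unfolding R_def using eta
    by (metis of_nat_floor less_eq_real_def of_nat_le_iff order_trans zero_less_divide_1_iff)
  have big: "r \<le> R \<Longrightarrow> real (card (ball U F b w (Suc r) - ball U F b w r)) \<ge> \<eta> * real (card V)" for r
    using H Rle by (meson not_less)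
  have ind: "r \<le> Suc R \<Longrightarrow> real (card (ball U F b w r)) \<ge> 1 + real r * (\<eta> * real (card V))" for r
  proof (induction r)
    case 0
    have "w \<in> ball U F b w 0" using ball0 w by blast
    moreover have "finite (ball U F b w 0)" using ball_sub[of U F b w 0] U finV by (meson finite_subset)
    ultimately have "card (ball U F b w 0) \<ge> 1" by (metis card_0_eq empty_iff less_one not_le)
    then show ?case by simp
  next
    case (Suc r)
    then have "real (card (ball U F b w r)) \<ge> 1 + real r * (\<eta> * real (card V))" by simp
    moreover have "real (card (ball U F b w (Suc r) - ball U F b w r)) \<ge> \<eta> * real (card V)"
      using big Suc.prems by simp
    ultimately show ?case using ball_card_step[OF U, of F b w r] by (simp add: algebra_simps)
  qed
  have "real (card (ball U F b w (Suc R))) \<ge> 1 + real (Suc R) * (\<eta> * real (card V))" using ind[of "Suc R"] by simp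
  moreover have "real (Suc R) > 1 / \<eta>"
  proof -
    have "0 \<le> \<lfloor>1 / \<eta>\<rfloor>" using eta by simp
    then have "real (nat \<lfloor>1 / \<eta>\<rfloor>) = of_int \<lfloor>1 / \<eta>\<rfloor>" by simp
    moreover have "1 / \<eta> < of_int \<lfloor>1 / \<eta>\<rfloor> + 1" by (rule real_of_int_floor_add_one_gt)
    ultimately show ?thesis unfolding R_def of_nat_Suc by linarith
  qed
  then have "real (Suc R) * \<eta> > 1" using eta by (simp add: divide_less_eq)
  then have "real (Suc R) * (\<eta> * real (card V)) \<ge> real (card V)"
    using mult_right_mono[of 1 "real (Suc R) * \<eta>" "real (card V)"] by (simp add: mult.assoc)
  moreover have "card (ball U F b w (Suc R)) \<le> card V" using ball_sub[of U] U finV by (meson card_mono order_trans)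
  ultimately show False by linarith
qed

lemma bad_sum: "(\<Sum>u\<in>U. card (badset U b u)) \<le> card V" if "U \<subseteq> V" for U b
proof -
  have fU: "finite U" using that finV by (meson finite_subset)
  have "(\<Sum>u\<in>U. card (badset U b u)) = card (SIGMA u:U. badset U b u)"
    using fU by (subst card_SigmaI) (auto simp: badset_def intro: finite_subset[OF _ fU])
  also have "\<dots> \<le> card V"
  proof -
    have "inj_on snd (SIGMA u:U. badset U b u)"
      by (rule inj_onI) (auto simp: badset_def intro: in_inj)
    moreover have "snd ` (SIGMA u:U. badset U b u) \<subseteq> V" using that by (auto simp: badset_def)
    ultimately show ?thesis by (metis card_image card_mono finV)
  qed
  finally show ?thesis .
qed

lemma bad_card:
  assumes U: "U \<subseteq> V" and t: "t > 0"
  shows "real (card {u\<in>U. t \<le> real (card (badset U b u))}) * t \<le> real (card V)"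
proof -
  let ?X = "{u\<in>U. t \<le> real (card (badset U b u))}"
  have fU: "finite U" using U finV by (meson finite_subset)
  have "real (card ?X) * t = (\<Sum>u\<in>?X. t)" by simp
  also have "\<dots> \<le> (\<Sum>u\<in>?X. real (card (badset U b u)))" by (rule sum_mono) auto
  also have "\<dots> \<le> (\<Sum>u\<in>U. real (card (badset U b u)))" by (rule sum_mono2) (use fU in auto)
  also have "\<dots> \<le> real (card V)" unfolding of_nat_sum[symmetric] of_nat_le_iff by (rule bad_sum[OF U])
  finally show ?thesis .
qed

end


context pdg begin

lemma cols_disj:
  assumes gP: "goodp U F b w r P" and U: "U \<subseteq> V" and cw: "cv w \<notin> F"
  shows "cols P \<inter> F = {}"
proof -
  have Pne: "P \<noteq> []" and hP: "hd P = w" using gP by (auto simp: goodp_def)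
  then have Pe: "P = w # tl P" by (cases P) auto
  have h1: "\<forall>v\<in>set (tl P). cv v \<notin> F" and h2: "\<forall>e\<in>set (path_edges P). ce e \<notin> F" using gP by (auto simp: goodp_def)
  have "\<forall>v\<in>set P. cv v \<notin> F"
  proof
    fix v assume "v \<in> set P"
    then have "v = w \<or> v \<in> set (tl P)" using Pe by (metis set_ConsD)
    then show "cv v \<notin> F" using h1 cw by blast
  qed
  then show ?thesis using h2 unfolding cols_def by blast
qed

lemma connect:
  assumes U: "U \<subseteq> V" and aV: "a \<in> V" and bV: "b \<in> V" and ab: "a \<noteq> b"
    and aw: "(a,w) \<in> E" and cw: "cv w \<notin> S" and caw: "ce (a,w) \<notin> S" and cawb: "ce (a,w) \<noteq> cv b"
    and wb: "w \<noteq> b"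
    and gP: "goodp U (S \<union> {cv b, cv a, ce (a,w)}) b w r P" and lP: "last P = u"
    and ub: "(u,b) \<in> E" and cub: "ce (u,b) \<notin> S \<union> {cv b, cv a, ce (a,w)}"
  shows "is_path V E (a # P @ [b]) \<and> hd (a # P @ [b]) = a \<and> last (a # P @ [b]) = b
    \<and> rainbow_path cv ce (a # P @ [b]) \<and> path_length (a # P @ [b]) \<le> Suc (Suc r)
    \<and> (\<forall>e \<in> set (path_edges (a # P @ [b])). ce e \<notin> S)
    \<and> (\<forall>v \<in> set (a # P @ [b]). v \<noteq> a \<and> v \<noteq> b \<longrightarrow> cv v \<notin> S)"
proof -
  let ?F = "S \<union> {cv b, cv a, ce (a,w)}"
  have Pne: "P \<noteq> []" and hP: "hd P = w" and PU: "set P \<subseteq> U" and PE: "set (path_edges P) \<subseteq> E"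
    and Plen: "length P \<le> Suc r" and Prb: "rainbow_path cv ce P" and GP: "G b (last P) \<inter> cols P = {}"
    using gP by (auto simp: goodp_def)
  have wV: "w \<in> V" using aw Esub by auto
  have wa: "w \<noteq> a" using aw noloop by auto
  have cwF: "cv w \<notin> ?F"
    using cw wb wa cv_inj wV aV bV ce_cv2[OF aw] by (auto dest: inj_onD)
  have disj: "cols P \<inter> ?F = {}" by (rule cols_disj[OF gP U cwF])
  have cubP: "ce (u,b) \<notin> cols P" using GP lP ub by (auto simp: G_def)
  have pe: "path_edges (a # P @ [b]) = (a, w) # path_edges P @ [(u, b)]"
    using Pne hP lP by (simp add: path_edges_Cons path_edges_snoc)
  have cab: "cv a \<noteq> cv b" using ab cv_inj aV bV by (auto dest: inj_onD)
  have rbP: "distinct (map cv P @ map ce (path_edges P))" using Prb by (simp add: rainbow_path_def)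
  have rb: "rainbow_path cv ce (a # P @ [b])"
    unfolding rainbow_path_def pe using rbP disj cubP cub cab ce_cv1[OF aw] cawb
    by (auto simp: cols_def)
  have dist: "distinct (a # P @ [b])"
  proof -
    have "distinct (map cv (a # P @ [b]))" using rb unfolding rainbow_path_def distinct_append by blast
    then show ?thesis unfolding distinct_map by blast
  qed
  show ?thesis
  proof (intro conjI)
    show "is_path V E (a # P @ [b])" unfolding is_path_def
      using dist PU U aV bV pe PE aw ub by auto
    show "path_length (a # P @ [b]) \<le> Suc (Suc r)" using Plen by (simp add: path_length_def)
    show "\<forall>e \<in> set (path_edges (a # P @ [b])). ce e \<notin> S"
      using pe caw cub disj by (auto simp: cols_def)
    show "\<forall>v \<in> set (a # P @ [b]). v \<noteq> a \<and> v \<noteq> b \<longrightarrow> cv v \<notin> S"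
      using disj by (auto simp: cols_def)
  qed (use rb in auto)
qed

end


lemma numeric:
  fixes \<epsilon> nn :: real and k :: nat
  assumes e0: "0 < \<epsilon>" and e1: "\<epsilon> < 1" and k1: "1 \<le> k" and nb: "nn \<ge> 1800 * real k / \<epsilon> ^ 4"
  and th_def: "th = \<epsilon> / 2" and et_def: "et = \<epsilon>^2 / 20" and tt_def: "tt = \<epsilon>^2 * nn / 20"
  and lam_def: "lam = et * nn + tt + nn / tt + 2 * (real k + 2) + 6 / et + 3"
  shows "nn > 0" "tt > 0" "et > 0" "th > 0" "lam \<ge> 0"
    "\<And>j::nat. real j * th * nn \<le> nn \<Longrightarrow> real j * lam + th * nn + real k + 3 \<le> \<epsilon> * nn"
    "th * nn + real k + 3 > nn / tt + 2 * real k"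
    "1 / et + 2 \<le> 1280 / \<epsilon>^2"
proof -
  define q where "q = 1 / \<epsilon>"
  have q1: "q \<ge> 1" using e0 e1 by (simp add: q_def)
  have qe: "q * \<epsilon> = 1" using e0 by (simp add: q_def)
  have kr: "real k \<ge> 1" using k1 by simp
  have q3: "q^3 \<ge> q" "q^3 \<ge> 1" using q1
    by (metis le_less_trans less_le_not_le mult_le_cancel_left1 power3_eq_cube self_le_power zero_less_numeral nat_le_linear not_one_le_zero numeral_le_iff semiring_norm(69) one_le_power)+
  have q4: "1 / \<epsilon>^4 = q^4" by (simp add: q_def power_one_over)
  have nb2: "nn \<ge> 1800 * real k * q^4" using nb q4 by (simp add: divide_inverse)
  have kq: "1800 * real k * q^4 > 0" using q1 kr by simp
  show nn0: "nn > 0" using nb2 kq by linarith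
  have en: "\<epsilon> * nn \<ge> 1800 * real k * q^3"
  proof -
    have "\<epsilon> * nn \<ge> \<epsilon> * (1800 * real k * q^4)" using nb2 e0 by (simp add: mult_left_mono)
    also have "\<epsilon> * (1800 * real k * q^4) = 1800 * real k * q^3 * (q * \<epsilon>)" by (simp add: power_numeral_reduce algebra_simps)
    finally show ?thesis using qe by simp
  qed
  show tt0: "tt > 0" unfolding tt_def using e0 nn0 by simp
  show et0: "et > 0" unfolding et_def using e0 by simp
  show "th > 0" unfolding th_def using e0 by simp
  have ntt: "nn / tt = 20 * q^2" unfolding tt_def q_def using e0 nn0 by (simp add: field_simps)
  have iet: "6 / et = 120 * q^2" unfolding et_def q_def using e0 by (simp add: field_simps)
  have lam_eq: "lam = \<epsilon>^2 * nn / 10 + 140 * q^2 + 2 * real k + 7"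
    unfolding lam_def ntt iet unfolding et_def tt_def by (simp add: algebra_simps)
  show lam0: "lam \<ge> 0" unfolding lam_eq using e0 nn0 by simp
  show "1 / et + 2 \<le> 1280 / \<epsilon>^2"
  proof -
    have "1 / et = 20 * q^2" unfolding et_def q_def using e0 by (simp add: field_simps)
    moreover have "1280 / \<epsilon>^2 = 1280 * q^2" unfolding q_def using e0 by (simp add: field_simps)
    moreover have "q^2 \<ge> 1" using q1 by (simp add: one_le_power)
    ultimately show ?thesis by linarith
  qed
  show "th * nn + real k + 3 > nn / tt + 2 * real k"
  proof -
    have "th * nn = \<epsilon> * nn / 2" by (simp add: th_def)
    moreover have "q^3 \<ge> q^2" using q1 by (simp add: power_increasing)
    moreover have "real k * q^3 \<ge> real k" using q3 kr by simp
    moreover have "real k * q^3 \<ge> q^3" using mult_right_mono[of 1 "real k" "q^3"] q3 kr q1 by simp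
    ultimately show ?thesis using en ntt by linarith
  qed
  fix j :: nat assume jh: "real j * th * nn \<le> nn"
  have jq: "real j \<le> 2 * q"
  proof -
    have "real j * th \<le> 1" using jh nn0 by (simp add: mult_le_cancel_right1[symmetric] mult.commute mult.left_commute)
    then have "real j * \<epsilon> \<le> 2" by (simp add: th_def)
    then have "real j * \<epsilon> * q \<le> 2 * q" using q1 by (simp add: mult_right_mono)
    moreover have "real j * \<epsilon> * q = real j" using qe by (metis mult.assoc mult.commute mult_1_right)
    ultimately show ?thesis by simp
  qed
  have "real j * lam \<le> 2 * q * lam" using jq lam0 by (simp add: mult_right_mono)
  also have "2 * q * lam = \<epsilon> * nn / 5 + 280 * q^3 + 4 * real k * q + 14 * q"
  proof -
    have "2 * q * (\<epsilon>^2 * nn / 10) = (q * \<epsilon>) * (\<epsilon> * nn) / 5" by (simp add: power2_eq_square algebra_simps)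
    then have "2 * q * (\<epsilon>^2 * nn / 10) = \<epsilon> * nn / 5" using qe by simp
    then show ?thesis unfolding lam_eq by (simp add: algebra_simps power_numeral_reduce)
  qed
  finally have jl: "real j * lam \<le> \<epsilon> * nn / 5 + 280 * q^3 + 4 * real k * q + 14 * q" .
  define K where "K = real k * q^3"
  have kq3: "q^3 \<le> K" unfolding K_def using mult_right_mono[of 1 "real k" "q^3"] q3 kr q1 by simp
  have kq: "real k * q \<le> K" unfolding K_def using mult_left_mono[of q "q^3" "real k"] q3 by simp
  have kk: "real k \<le> K" unfolding K_def using mult_left_mono[of 1 "q^3" "real k"] q3 by simp
  have en2: "\<epsilon> * nn \<ge> 1800 * K" using en unfolding K_def by (simp add: mult.assoc)
  have jl2: "real j * lam \<le> \<epsilon> * nn / 5 + 280 * q^3 + 4 * (real k * q) + 14 * q" using jl by (simp add: mult.assoc)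
  show "real j * lam + th * nn + real k + 3 \<le> \<epsilon> * nn" using jl2 en2 kq3 kq kk q3 unfolding th_def by linarith
qed



locale mc = pdg V E cv ce for V :: "'a set" and E and cv :: "'a \<Rightarrow> 'c" and ce +
  fixes \<epsilon> :: real and k :: nat and \<delta> :: real
  assumes e0: "0 < \<epsilon>" and e1: "\<epsilon> < 1" and k1: "1 \<le> k"
    and nb: "real (card V) \<ge> 1800 * real k / \<epsilon> ^ 4" and dbig: "\<delta> > \<epsilon> * real (card V)"
begin

definition "nn = real (card V)"
definition "th = \<epsilon> / 2"
definition "et = \<epsilon>^2 / 20"
definition "tt = \<epsilon>^2 * nn / 20"
definition "lam = et * nn + tt + nn / tt + 2 * (real k + 2) + 6 / et + 3"
definition "dd = 1280 / \<epsilon>^2"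

lemmas num = numeric[OF e0 e1 k1 nb[folded nn_def] th_def et_def tt_def lam_def]

definition Xset where "Xset U b = {u\<in>U. tt \<le> real (card (badset U b u))}"

definition DONE where "DONE U \<longleftrightarrow> (\<forall>w\<in>U. \<forall>b\<in>V. \<forall>F r. finite F \<longrightarrow> card F \<le> k + 2 \<longrightarrow> w \<notin> Xset U b
   \<longrightarrow> real r \<le> 1 / et \<longrightarrow> real (card (ball U F b w (Suc r) - ball U F b w r)) < et * nn
   \<longrightarrow> real (card (U - ball U F b w r)) < th * nn)"

lemma Xcard: "U \<subseteq> V \<Longrightarrow> real (card (Xset U b)) \<le> nn / tt"
  using bad_card[of U tt b] num(2) unfolding Xset_def nn_def by (simp add: field_simps)

lemma sum_in_out: assumes U: "U \<subseteq> V"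
  shows "(\<Sum>b\<in>U. card (inN b \<inter> U)) = (\<Sum>u\<in>U. card (outN u \<inter> U))"
proof -
  have fU: "finite U" using U finV by (meson finite_subset)
  have "(\<Sum>u\<in>U. card (outN u \<inter> U)) = card (SIGMA u:U. outN u \<inter> U)"
    using fU by (subst card_SigmaI) auto
  moreover have "(\<Sum>b\<in>U. card (inN b \<inter> U)) = card (SIGMA b:U. inN b \<inter> U)"
    using fU by (subst card_SigmaI) auto
  moreover have "(SIGMA b:U. inN b \<inter> U) = prod.swap ` (SIGMA u:U. outN u \<inter> U)"
    by (auto simp: inN_def outN_def image_iff)
  moreover have "card (prod.swap ` (SIGMA u:U. outN u \<inter> U)) = card (SIGMA u:U. outN u \<inter> U)"
    by (rule card_image) (simp add: inj_on_def)
  ultimately show ?thesis by simp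
qed

lemma Acard:
  assumes U: "U \<subseteq> V" and Une: "U \<noteq> {}" and deg: "\<forall>u\<in>U. real (card (outN u \<inter> U)) \<ge> D"
  shows "real (card {b\<in>U. th * nn + real k + 3 \<le> real (card (inN b \<inter> U))}) \<ge> D - (th * nn + real k + 3)"
proof -
  let ?A = "{b\<in>U. th * nn + real k + 3 \<le> real (card (inN b \<inter> U))}"
  let ?c = "th * nn + real k + 3"
  have fU: "finite U" using U finV by (meson finite_subset)
  have cU: "real (card U) > 0" using fU Une by (simp add: card_gt_0_iff)
  have "real (card U) * D = (\<Sum>u\<in>U. D)" by simp
  also have "\<dots> \<le> (\<Sum>u\<in>U. real (card (outN u \<inter> U)))" using deg by (intro sum_mono) auto
  also have "\<dots> = (\<Sum>b\<in>U. real (card (inN b \<inter> U)))" using sum_in_out[OF U] by (metis of_nat_sum)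
  also have "\<dots> = (\<Sum>b\<in>?A. real (card (inN b \<inter> U))) + (\<Sum>b\<in>U - ?A. real (card (inN b \<inter> U)))"
    using fU by (metis (no_types, lifting) Diff_subset sum.subset_diff add.commute mem_Collect_eq subsetI)
  also have "\<dots> \<le> (\<Sum>b\<in>?A. real (card U)) + (\<Sum>b\<in>U - ?A. ?c)"
  proof (intro add_mono sum_mono)
    fix b assume "b \<in> ?A"
    show "real (card (inN b \<inter> U)) \<le> real (card U)" using fU by (simp add: card_mono)
  next
    fix b assume "b \<in> U - ?A"
    then show "real (card (inN b \<inter> U)) \<le> ?c" by auto
  qed
  also have "\<dots> = real (card ?A) * real (card U) + real (card (U - ?A)) * ?c" by simp
  also have "\<dots> \<le> real (card ?A) * real (card U) + real (card U) * ?c"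
  proof -
    have "card (U - ?A) \<le> card U" using fU by (simp add: card_mono)
    moreover have "?c \<ge> 0" using num(4) num(1) by (simp add: th_def)
    ultimately show ?thesis by (simp add: mult_right_mono)
  qed
  finally have "real (card U) * D \<le> real (card U) * (real (card ?A) + ?c)" by (simp add: algebra_simps)
  then have "D \<le> real (card ?A) + ?c" using cU by simp
  then show ?thesis by simp
qed

lemma single_path: "x \<in> V \<Longrightarrow> is_path V E [x] \<and> hd [x] = x \<and> last [x] = x \<and> rainbow_path cv ce [x] \<and> path_length [x] = 0"
  by (simp add: is_path_def rainbow_path_def path_length_def)

lemma done_case:
  assumes U: "U \<subseteq> V" and Une: "U \<noteq> {}"
    and deg: "\<forall>u\<in>U. real (card (outN u \<inter> U)) \<ge> \<delta> - real j * lam"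
    and sz: "real (card U) + real j * th * nn \<le> nn" and D: "DONE U"
  shows "\<exists>A\<subseteq>V. kd_connected V E cv ce k dd A \<and> real (card A) \<ge> \<delta> - \<epsilon> * nn"
proof -
  define A where "A = {b\<in>U. th * nn + real k + 3 \<le> real (card (inN b \<inter> U))}"
  have fU: "finite U" using U finV by (meson finite_subset)
  have jnum: "real j * lam + th * nn + real k + 3 \<le> \<epsilon> * nn"
    using num(6)[of j] sz by (meson le_add_same_cancel2 of_nat_0_le_iff order_trans)
  have cA: "real (card A) \<ge> \<delta> - \<epsilon> * nn"
    using Acard[OF U Une deg] jnum unfolding A_def by linarith
  have degbig: "\<delta> - real j * lam > nn / tt + 2 * real k"
    using jnum num(7) dbig unfolding nn_def by linarith
  have AU: "A \<subseteq> U" unfolding A_def by auto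
  have "kd_connected V E cv ce k dd A"
    unfolding kd_connected_def
  proof (intro allI impI)
    fix S :: "'c set" and x y assume H: "finite S \<and> card S < k \<and> x \<in> A \<and> y \<in> A"
    then have fS: "finite S" and cS: "card S < k" and xA: "x \<in> A" and yA: "y \<in> A" by auto
    have xV: "x \<in> V" and yV: "y \<in> V" using xA yA AU U by auto
    show "\<exists>xs. is_path V E xs \<and> hd xs = x \<and> last xs = y \<and> rainbow_path cv ce xs \<and>
              real (path_length xs) \<le> dd \<and>
              (\<forall>e \<in> set (path_edges xs). ce e \<notin> S) \<and>
              (\<forall>v \<in> set xs. v \<noteq> x \<and> v \<noteq> y \<longrightarrow> cv v \<notin> S)"
    proof (cases "x = y")
      case True
      have "dd \<ge> 0" unfolding dd_def by simp
      then show ?thesis using single_path[OF xV] True by (intro exI[of _ "[x]"]) auto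
    next
      case False
      define a where "a = x"
      define b where "b = y"
      note defs = a_def b_def
      have aU: "a \<in> U" and bU: "b \<in> U" using xA yA AU defs by auto
      have aV: "a \<in> V" and bV: "b \<in> V" using aU bU U by auto
      have ab: "a \<noteq> b" using False defs by simp
      define Bad where "Bad = Xset U b \<union> {w\<in>V. cv w \<in> S} \<union> {w\<in>outN a. ce (a,w) \<in> insert (cv b) S} \<union> {b}"
      have fBad: "finite Bad" unfolding Bad_def Xset_def using fU finV outN_sub[of a]
        by (auto intro: finite_subset)
      have "real (card Bad) \<le> real (card (Xset U b)) + real (card {w\<in>V. cv w \<in> S})
          + real (card {w\<in>outN a. ce (a,w) \<in> insert (cv b) S}) + 1"
      proof -
        have "card Bad \<le> card (Xset U b) + card {w\<in>V. cv w \<in> S} + card {w\<in>outN a. ce (a,w) \<in> insert (cv b) S} + card {b}"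
          unfolding Bad_def by (meson add_mono card_Un_le le_refl order_trans)
        then show ?thesis by simp
      qed
      moreover have "real (card (Xset U b)) \<le> nn / tt" by (rule Xcard[OF U])
      moreover have "card {w\<in>V. cv w \<in> S} \<le> card S" by (rule card_cv_pre[OF fS])
      moreover have "card {w\<in>outN a. ce (a,w) \<in> insert (cv b) S} \<le> card S + 1"
        using card_out_pre[of "insert (cv b) S" a] fS card_insert_le_m1 by (metis card_insert_if finite_insert le_SucI Suc_eq_plus1 eq_imp_le)
      ultimately have cBad: "real (card Bad) \<le> nn / tt + 2 * real k"
        using cS by linarith
      have "\<not> (outN a \<inter> U \<subseteq> Bad)"
      proof
        assume "outN a \<inter> U \<subseteq> Bad"
        then have "card (outN a \<inter> U) \<le> card Bad" using fBad by (rule card_mono[rotated])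
        then show False using deg aU cBad degbig by force
      qed
      then obtain w where wO: "w \<in> outN a" and wU: "w \<in> U" and wB: "w \<notin> Bad" by auto
      have aw: "(a,w) \<in> E" using wO by (simp add: outN_def)
      have wX: "w \<notin> Xset U b" and cw: "cv w \<notin> S" and caw: "ce (a,w) \<notin> S" and cawb: "ce (a,w) \<noteq> cv b"
        and wb: "w \<noteq> b" using wB wO wU U unfolding Bad_def by auto
      define F where "F = S \<union> {cv b, cv a, ce (a,w)}"
      have fF: "finite F" using fS by (simp add: F_def)
      have cF: "card F \<le> k + 2"
      proof -
        have "card F \<le> card S + card {cv b, cv a, ce (a,w)}" unfolding F_def by (rule card_Un_le)
        also have "card {cv b, cv a, ce (a,w)} \<le> 3" by (simp add: card_insert_le_m1)
        finally show ?thesis using cS by linarith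
      qed
      obtain r where r1: "real r \<le> 1 / et" and r2: "real (card (ball U F b w (Suc r) - ball U F b w r)) < et * nn"
        using stop_exists[OF U wU num(3)] unfolding nn_def by blast
      have miss: "real (card (U - ball U F b w r)) < th * nn"
        using D wU bV fF cF wX r1 r2 unfolding DONE_def by blast
      let ?Q = "inN b \<inter> U \<inter> ball U F b w r"
      have "inN b \<inter> U \<subseteq> ?Q \<union> (U - ball U F b w r)" by auto
      then have "card (inN b \<inter> U) \<le> card (?Q \<union> (U - ball U F b w r))" using fU by (intro card_mono) auto
      also have "\<dots> \<le> card ?Q + card (U - ball U F b w r)" by (rule card_Un_le)
      finally have "real (card (inN b \<inter> U)) \<le> real (card ?Q) + real (card (U - ball U F b w r))" by simp
      moreover have "th * nn + real k + 3 \<le> real (card (inN b \<inter> U))" using yA defs unfolding A_def by auto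
      ultimately have cQ: "real (card ?Q) > real k + 3" using miss by linarith
      have "card {u\<in>inN b. ce (u,b) \<in> F} \<le> card F" by (rule card_in_pre[OF fF])
      then have "card {u\<in>inN b. ce (u,b) \<in> F} < card ?Q" using cF cQ by linarith
      then have "\<not> (?Q \<subseteq> {u\<in>inN b. ce (u,b) \<in> F})"
        using card_mono[of "{u\<in>inN b. ce (u,b) \<in> F}" ?Q] finite_subset[OF inN_sub[of b] finV] by auto
      then obtain u where uQ: "u \<in> ?Q" and cub: "ce (u,b) \<notin> F" by auto
      have ub: "(u,b) \<in> E" using uQ by (simp add: inN_def)
      obtain P where gP: "goodp U F b w r P" and lP: "last P = u" using uQ unfolding ball_def by auto
      have C: "is_path V E (a # P @ [b]) \<and> hd (a # P @ [b]) = a \<and> last (a # P @ [b]) = b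
        \<and> rainbow_path cv ce (a # P @ [b]) \<and> path_length (a # P @ [b]) \<le> Suc (Suc r)
        \<and> (\<forall>e \<in> set (path_edges (a # P @ [b])). ce e \<notin> S)
        \<and> (\<forall>v \<in> set (a # P @ [b]). v \<noteq> a \<and> v \<noteq> b \<longrightarrow> cv v \<notin> S)"
        by (rule connect[OF U aV bV ab aw cw caw cawb wb gP[unfolded F_def] lP ub cub[unfolded F_def]])
      have "real (path_length (a # P @ [b])) \<le> real r + 2" using C by simp
      also have "\<dots> \<le> dd" using r1 num(8) unfolding dd_def by linarith
      finally have "real (path_length (a # P @ [b])) \<le> dd" .
      then show ?thesis using C defs by (intro exI[of _ "a # P @ [b]"]) auto
    qed
  qed
  then show ?thesis using cA AU U by blast
qed

lemma rec_step:
  assumes U: "U \<subseteq> V"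
    and deg: "\<forall>u\<in>U. real (card (outN u \<inter> U)) \<ge> \<delta> - real j * lam"
    and sz: "real (card U) + real j * th * nn \<le> nn" and ND: "\<not> DONE U"
  shows "\<exists>U'. U' \<subseteq> V \<and> U' \<noteq> {} \<and> card U' < card U
     \<and> (\<forall>u\<in>U'. real (card (outN u \<inter> U')) \<ge> \<delta> - real (Suc j) * lam)
     \<and> real (card U') + real (Suc j) * th * nn \<le> nn"
proof -
  obtain w b F r where wU: "w \<in> U" and bV: "b \<in> V" and fF: "finite F" and cF: "card F \<le> k + 2"
    and wX: "w \<notin> Xset U b" and r1: "real r \<le> 1 / et"
    and r2: "real (card (ball U F b w (Suc r) - ball U F b w r)) < et * nn"
    and miss: "real (card (U - ball U F b w r)) \<ge> th * nn"
    using ND unfolding DONE_def by (auto simp: not_less)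
  define B where "B = ball U F b w r"
  define U' where "U' = B - Xset U b"
  have fU: "finite U" using U finV by (meson finite_subset)
  have BU: "B \<subseteq> U" unfolding B_def by (rule ball_sub)
  have wB: "w \<in> B" unfolding B_def using ball0[OF wU] ball_mono[of 0 r U F b w] by auto
  have wU': "w \<in> U'" using wB wX unfolding U'_def by auto
  have cUB: "card U = card B + card (U - B)" using BU fU
    by (metis card_Diff_subset finite_subset card_mono le_add_diff_inverse)
  have pos: "th * nn > 0" using num(4) num(1) by simp
  have cU'B: "card U' \<le> card B" unfolding U'_def using BU fU by (intro card_mono) (auto intro: finite_subset)
  have lt: "card U' < card U" using cU'B cUB miss[folded B_def] pos by linarith
  have sz': "real (card U') + real (Suc j) * th * nn \<le> nn"
  proof -
    have e: "real (Suc j) * th * nn = real j * th * nn + th * nn" by (simp add: algebra_simps)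
    have "real (card U) = real (card B) + real (card (U - B))" using cUB by simp
    then show ?thesis using e cU'B miss[folded B_def] sz by linarith
  qed
  have deg': "\<forall>u\<in>U'. real (card (outN u \<inter> U')) \<ge> \<delta> - real (Suc j) * lam"
  proof
    fix u assume uU': "u \<in> U'"
    then have uB: "u \<in> B" and uX: "u \<notin> Xset U b" unfolding U'_def by auto
    have uU: "u \<in> U" using uB BU by auto
    have sub: "outN u \<inter> U \<subseteq> (outN u \<inter> U') \<union> (outN u \<inter> U - ball U F b w (Suc r))
       \<union> (ball U F b w (Suc r) - B) \<union> Xset U b"
      unfolding U'_def B_def Xset_def by auto
    have fin: "finite ((outN u \<inter> U') \<union> (outN u \<inter> U - ball U F b w (Suc r))
       \<union> (ball U F b w (Suc r) - B) \<union> Xset U b)"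
      using fU ball_sub[of U F b w "Suc r"] BU unfolding U'_def Xset_def by (auto intro: finite_subset)
    have "card (outN u \<inter> U) \<le> card ((outN u \<inter> U') \<union> (outN u \<inter> U - ball U F b w (Suc r))
       \<union> (ball U F b w (Suc r) - B) \<union> Xset U b)" by (rule card_mono[OF fin sub])
    also have "\<dots> \<le> card (outN u \<inter> U') + card (outN u \<inter> U - ball U F b w (Suc r))
       + card (ball U F b w (Suc r) - B) + card (Xset U b)"
      by (meson add_mono card_Un_le le_refl order_trans)
    finally have c1: "real (card (outN u \<inter> U)) \<le> real (card (outN u \<inter> U')) + real (card (outN u \<inter> U - ball U F b w (Suc r)))
       + real (card (ball U F b w (Suc r) - B)) + real (card (Xset U b))" by linarith
    have g: "card (outN u \<inter> U - ball U F b w (Suc r)) \<le> 2 * card F + 6 * r + 3 + card (badset U b u)"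
      using growth[OF U fF uB[unfolded B_def]] .
    have bt: "real (card (badset U b u)) < tt" using uX uU unfolding Xset_def by auto
    have r6: "6 * real r \<le> 6 / et" using r1 by simp
    have g2: "real (card (outN u \<inter> U - ball U F b w (Suc r))) \<le> 2 * (real k + 2) + 6 / et + 3 + tt"
    proof -
      have "real (card (outN u \<inter> U - ball U F b w (Suc r))) \<le> 2 * real (card F) + 6 * real r + 3 + real (card (badset U b u))"
        using g by linarith
      moreover have "real (card F) \<le> real k + 2" using cF by simp
      ultimately show ?thesis using bt r6 by argo
    qed
    have "real (card (outN u \<inter> U)) \<le> real (card (outN u \<inter> U')) + lam"
      using c1 g2 r2 Xcard[OF U, of b] unfolding lam_def B_def by linarith
    then show "real (card (outN u \<inter> U')) \<ge> \<delta> - real (Suc j) * lam"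
      using deg uU by (auto simp: algebra_simps)
  qed
  have U'V: "U' \<subseteq> V" using BU U unfolding U'_def by auto
  have U'ne: "U' \<noteq> {}" using wU' by auto
  show ?thesis using U'V U'ne lt deg' sz' by blast
qed

lemma rec_main:
  "\<forall>U j. U \<subseteq> V \<longrightarrow> U \<noteq> {} \<longrightarrow> card U = m
     \<longrightarrow> (\<forall>u\<in>U. real (card (outN u \<inter> U)) \<ge> \<delta> - real j * lam)
     \<longrightarrow> real (card U) + real j * th * nn \<le> nn
     \<longrightarrow> (\<exists>A\<subseteq>V. kd_connected V E cv ce k dd A \<and> real (card A) \<ge> \<delta> - \<epsilon> * nn)"
proof (induction m rule: less_induct)
  case (less m)
  show ?case
  proof (intro allI impI)
    fix U j assume U: "U \<subseteq> V" and Une: "U \<noteq> {}" and cm: "card U = m"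
      and deg: "\<forall>u\<in>U. real (card (outN u \<inter> U)) \<ge> \<delta> - real j * lam"
      and sz: "real (card U) + real j * th * nn \<le> nn"
    show "\<exists>A\<subseteq>V. kd_connected V E cv ce k dd A \<and> real (card A) \<ge> \<delta> - \<epsilon> * nn"
    proof (cases "DONE U")
      case True
      then show ?thesis by (rule done_case[OF U Une deg sz])
    next
      case False
      obtain U' where "U' \<subseteq> V" "U' \<noteq> {}" "card U' < card U"
        "\<forall>u\<in>U'. real (card (outN u \<inter> U')) \<ge> \<delta> - real (Suc j) * lam"
        "real (card U') + real (Suc j) * th * nn \<le> nn"
        using rec_step[OF U deg sz False] by blast
      then show ?thesis using less.IH[of "card U'"] cm by blast
    qed
  qed
qed

end


lemma min_outdeg_le:
  assumes "digraph V E" "u \<in> V"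
  shows "min_outdeg V E \<le> card {y. (u, y) \<in> E}"
proof -
  have "finite V" using assms(1) by (simp add: digraph_def)
  then show ?thesis unfolding min_outdeg_def using assms(2) by (auto intro: Min_le)
qed

lemma min_outdeg_le_card:
  assumes "digraph V E"
  shows "min_outdeg V E \<le> card V"
proof (cases "V = {}")
  case True then show ?thesis by (simp add: min_outdeg_def)
next
  case False
  then obtain u where u: "u \<in> V" by auto
  have fV: "finite V" and Es: "E \<subseteq> V \<times> V" using assms by (auto simp: digraph_def)
  have "card {y. (u, y) \<in> E} \<le> card V" using Es fV by (intro card_mono) auto
  then show ?thesis using min_outdeg_le[OF assms u] by linarith
qed

lemma kd_empty: "kd_connected V E cv ce k d {}"
  by (simp add: kd_connected_def)

theorem mainTheorem7:
  fixes \<epsilon> :: real and k :: nat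
    and V :: "'a set" and E :: "('a \<times> 'a) set"
    and cv :: "'a \<Rightarrow> 'c" and ce :: "'a \<times> 'a \<Rightarrow> 'c"
  assumes "\<epsilon> > 0"
    and "digraph V E"
    and "proper_total_colouring V E cv ce"
    and "rainbow_vertex_set V cv"
    and "real (card V) \<ge> 1800 * real k / \<epsilon> ^ 4"
  shows "\<exists>A \<subseteq> V. kd_connected V E cv ce k (1280 / \<epsilon> ^ 2) A \<and>
           real (card A) \<ge> real (min_outdeg V E) - \<epsilon> * real (card V)"
proof (cases "real (min_outdeg V E) \<le> \<epsilon> * real (card V)")
  case True
  then show ?thesis using kd_empty by (intro exI[of _ "{}"]) auto
next
  case False
  then have dbig: "real (min_outdeg V E) > \<epsilon> * real (card V)" by simp
  have dle: "real (min_outdeg V E) \<le> real (card V)" using min_outdeg_le_card[OF assms(2)] by simp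
  have Vne: "V \<noteq> {}" using dbig assms(1) by (auto simp: min_outdeg_def)
  have cV: "real (card V) > 0" using Vne assms(2) by (simp add: digraph_def card_gt_0_iff)
  have e1: "\<epsilon> < 1"
  proof (rule ccontr)
    assume "\<not> \<epsilon> < 1"
    then have "\<epsilon> * real (card V) \<ge> real (card V)" using cV by simp
    then show False using dbig dle by linarith
  qed
  show ?thesis
  proof (cases "k = 0")
    case True
    have "kd_connected V E cv ce k (1280 / \<epsilon> ^ 2) V" using True by (simp add: kd_connected_def)
    moreover have "real (card V) \<ge> real (min_outdeg V E) - \<epsilon> * real (card V)"
      using dle assms(1) cV by (smt (verit) mult_pos_pos)
    ultimately show ?thesis by blast
  next
    case False
    then have k1: "1 \<le> k" by simp
    interpret M: mc V E cv ce \<epsilon> k "real (min_outdeg V E)"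
      by (unfold_locales) (use assms e1 k1 dbig in auto)
    have deg: "\<forall>u\<in>V. real (card (M.outN u \<inter> V)) \<ge> real (min_outdeg V E) - real (0::nat) * M.lam"
    proof
      fix u assume u: "u \<in> V"
      have "M.outN u \<inter> V = {y. (u, y) \<in> E}" using M.Esub by (auto simp: M.outN_def)
      then show "real (card (M.outN u \<inter> V)) \<ge> real (min_outdeg V E) - real (0::nat) * M.lam"
        using min_outdeg_le[OF assms(2) u] by simp
    qed
    have sz: "real (card V) + real (0::nat) * M.th * M.nn \<le> M.nn" by (simp add: M.nn_def)
    obtain A where "A \<subseteq> V" "kd_connected V E cv ce k M.dd A" "real (card A) \<ge> real (min_outdeg V E) - \<epsilon> * M.nn"
    proof -
      have "V \<subseteq> V" by simp
      then show ?thesis using M.rec_main[of "card V"] Vne deg sz that by blast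
    qed
    then show ?thesis unfolding M.dd_def M.nn_def by blast
  qed
qed


end
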